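(* Let $k\geq 0$ be an integer and let $G$ be a graph all of whose internal vertices are of type $0$ or $1$, such that $G_0$ is non-null, and let $n_0$ be the maximum number of vertices of a connected component of $G_0$. Then $\mu_\alpha(G)\leq k$ if and only if $\mu_\alpha(G_0)\leq k$ and for every independent set $I$ in $G_1$ of size at most $(k+1)n_0$ it holds that $\alpha(G_0)-i(G_0-N(I))\leq k$.
   Context: All graphs are finite and simple; the null graph (no vertices) is allowed. For a graph $H$, $\alpha(H)$ is the maximum size of an independent set, $i(H)$ the minimum size of an inclusion-maximal independent set (both $0$ for the null graph), and $\mu_\alpha(H)=\alpha(H)-i(H)$ is the independence gap. $N(I)=\bigcup_{v\in I}N(v)$ and $G_0-N(I)$ is obtained from $G_0$ by deleting the vertices of $N(I)$. Types of vertices: let $U$ be the set of vertices of $G$ whose connected component is a complete graph. In $G-U$, vertices of degree $1$ are leaves and the others are internal vertices. An internal vertex adjacent to exactly $k$ leaves is of type $k$; every vertex of $U$ is of type $0$. $G_i$ denotes the subgraph of $G$ induced by all vertices of type $i$. *)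

theory Defs
  imports Main
begin

text \<open>All notions below are relativised to the
vertex set, so the subgraph of (V,E) induced by S \<subseteq> V is simply (S,E).\<close>

definition graph :: "'a set \<Rightarrow> ('a \<Rightarrow> 'a \<Rightarrow> bool) \<Rightarrow> bool" where
  "graph V E \<longleftrightarrow> finite V \<and> (\<forall>x y. E x y \<longrightarrow> E y x) \<and> (\<forall>x. \<not> E x x)"

definition indep_set :: "'a set \<Rightarrow> ('a \<Rightarrow> 'a \<Rightarrow> bool) \<Rightarrow> 'a set \<Rightarrow> bool" where
  "indep_set V E S \<longleftrightarrow> S \<subseteq> V \<and> (\<forall>x\<in>S. \<forall>y\<in>S. \<not> E x y)"

definition maximal_indep_set :: "'a set \<Rightarrow> ('a \<Rightarrow> 'a \<Rightarrow> bool) \<Rightarrow> 'a set \<Rightarrow> bool" where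
  "maximal_indep_set V E S \<longleftrightarrow> indep_set V E S \<and>
     (\<forall>T. indep_set V E T \<and> S \<subseteq> T \<longrightarrow> T = S)"

definition alpha :: "'a set \<Rightarrow> ('a \<Rightarrow> 'a \<Rightarrow> bool) \<Rightarrow> nat" where
  "alpha V E = Max (card ` {S. indep_set V E S})"

definition indep_dom :: "'a set \<Rightarrow> ('a \<Rightarrow> 'a \<Rightarrow> bool) \<Rightarrow> nat" where
  "indep_dom V E = Min (card ` {S. maximal_indep_set V E S})"

definition mu_alpha :: "'a set \<Rightarrow> ('a \<Rightarrow> 'a \<Rightarrow> bool) \<Rightarrow> int" where
  "mu_alpha V E = int (alpha V E) - int (indep_dom V E)"

definition nbhd :: "'a set \<Rightarrow> ('a \<Rightarrow> 'a \<Rightarrow> bool) \<Rightarrow> 'a \<Rightarrow> 'a set" where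
  "nbhd V E v = {u \<in> V. E v u}"

definition nbhd_set :: "'a set \<Rightarrow> ('a \<Rightarrow> 'a \<Rightarrow> bool) \<Rightarrow> 'a set \<Rightarrow> 'a set" where
  "nbhd_set V E I = (\<Union>v\<in>I. nbhd V E v)"

definition comp :: "'a set \<Rightarrow> ('a \<Rightarrow> 'a \<Rightarrow> bool) \<Rightarrow> 'a \<Rightarrow> 'a set" where
  "comp V E v = {u \<in> V. (\<lambda>x y. E x y \<and> x \<in> V \<and> y \<in> V)\<^sup>*\<^sup>* v u}"

definition Uset :: "'a set \<Rightarrow> ('a \<Rightarrow> 'a \<Rightarrow> bool) \<Rightarrow> 'a set" where
  "Uset V E = {v \<in> V. \<forall>x\<in>comp V E v. \<forall>y\<in>comp V E v. x \<noteq> y \<longrightarrow> E x y}"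

definition leaf :: "'a set \<Rightarrow> ('a \<Rightarrow> 'a \<Rightarrow> bool) \<Rightarrow> 'a \<Rightarrow> bool" where
  "leaf V E v \<longleftrightarrow> v \<in> V - Uset V E \<and> card (nbhd (V - Uset V E) E v) = 1"

definition internal :: "'a set \<Rightarrow> ('a \<Rightarrow> 'a \<Rightarrow> bool) \<Rightarrow> 'a \<Rightarrow> bool" where
  "internal V E v \<longleftrightarrow> v \<in> V - Uset V E \<and> card (nbhd (V - Uset V E) E v) \<noteq> 1"

definition has_type :: "'a set \<Rightarrow> ('a \<Rightarrow> 'a \<Rightarrow> bool) \<Rightarrow> nat \<Rightarrow> 'a \<Rightarrow> bool" where
  "has_type V E k v \<longleftrightarrow> (v \<in> Uset V E \<and> k = 0) \<or>
     (internal V E v \<and> card {u \<in> V. leaf V E u \<and> E v u} = k)"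

definition type_set :: "'a set \<Rightarrow> ('a \<Rightarrow> 'a \<Rightarrow> bool) \<Rightarrow> nat \<Rightarrow> 'a set" where
  "type_set V E k = {v \<in> V. has_type V E k v}"

end

theory Submission
  imports Defs
begin

lemma indep_subset: "indep_set W E S \<Longrightarrow> T \<subseteq> S \<Longrightarrow> indep_set W E T"
  unfolding indep_set_def by blast

lemma indep_mono_W: "indep_set W E S \<Longrightarrow> W \<subseteq> W' \<Longrightarrow> indep_set W' E S"
  unfolding indep_set_def by blast

lemma finite_indep_family: "finite W \<Longrightarrow> finite {S. indep_set W E S}"
  by (rule finite_subset[of _ "Pow W"]) (auto simp: indep_set_def)

lemma alpha_ge: "finite W \<Longrightarrow> indep_set W E S \<Longrightarrow> card S \<le> alpha W E"
  unfolding alpha_def by (rule Max_ge) (auto intro: finite_indep_family)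

lemma alpha_obtain: assumes "finite W" shows "\<exists>S. indep_set W E S \<and> card S = alpha W E"
proof -
  have "indep_set W E {}" by (simp add: indep_set_def)
  then have "Max (card ` {S. indep_set W E S}) \<in> card ` {S. indep_set W E S}"
    by (intro Max_in) (auto intro: finite_indep_family assms)
  then show ?thesis unfolding alpha_def by auto
qed

lemma max_indep_extend:
  assumes "finite W" "indep_set W E X"
  shows "\<exists>M. maximal_indep_set W E M \<and> X \<subseteq> M"
proof -
  let ?F = "{T. indep_set W E T \<and> X \<subseteq> T}"
  have fin: "finite ?F"
    by (rule finite_subset[OF _ finite_indep_family[OF assms(1), of E]]) auto
  have ne: "?F \<noteq> {}" using assms(2) by auto
  have "Max (card ` ?F) \<in> card ` ?F" using fin ne by (intro Max_in) auto
  then obtain M where M: "M \<in> ?F" "card M = Max (card ` ?F)" by auto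
  have ge: "card T \<le> card M" if "T \<in> ?F" for T
    using M(2) fin that by (simp add: Max_ge)
  have "maximal_indep_set W E M"
    unfolding maximal_indep_set_def
  proof (intro conjI allI impI)
    show "indep_set W E M" using M by auto
    fix T assume T: "indep_set W E T \<and> M \<subseteq> T"
    then have "T \<in> ?F" using M by auto
    then have "card T \<le> card M" by (rule ge)
    moreover have "finite T" using T assms(1) unfolding indep_set_def by (auto intro: finite_subset)
    ultimately show "T = M" using T card_subset_eq[of T M] card_mono[of T M]
      by (metis antisym card_mono)
  qed
  then show ?thesis using M by auto
qed

lemma finite_maxindep_family: "finite W \<Longrightarrow> finite {S. maximal_indep_set W E S}"
  by (rule finite_subset[OF _ finite_indep_family[of W E]]) (auto simp: maximal_indep_set_def)

lemma indep_dom_le: "finite W \<Longrightarrow> maximal_indep_set W E S \<Longrightarrow> indep_dom W E \<le> card S"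
  unfolding indep_dom_def by (rule Min_le) (auto intro: finite_maxindep_family)

lemma indep_dom_obtain: assumes "finite W"
  shows "\<exists>S. maximal_indep_set W E S \<and> card S = indep_dom W E"
proof -
  obtain M where "maximal_indep_set W E M"
    using max_indep_extend[OF assms, of E "{}"] by (auto simp: indep_set_def)
  then have "Min (card ` {S. maximal_indep_set W E S}) \<in> card ` {S. maximal_indep_set W E S}"
    by (intro Min_in) (auto intro: finite_maxindep_family assms)
  then show ?thesis unfolding indep_dom_def by auto
qed

lemma maximal_dom:
  assumes irr: "\<forall>x. \<not> E x x" and M: "maximal_indep_set W E S" and v: "v \<in> W" "v \<notin> S"
  shows "\<exists>u\<in>S. E v u \<or> E u v"
proof (rule ccontr)
  assume "\<not> ?thesis"
  then have "indep_set W E (insert v S)" using M v irr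
    unfolding maximal_indep_set_def indep_set_def by auto
  then show False using M v unfolding maximal_indep_set_def by auto
qed

lemma dom_maximal:
  assumes "indep_set W E S" "\<forall>v\<in>W - S. \<exists>u\<in>S. E v u \<or> E u v"
  shows "maximal_indep_set W E S"
  unfolding maximal_indep_set_def
proof (intro conjI allI impI)
  show "indep_set W E S" by fact
  fix T assume T: "indep_set W E T \<and> S \<subseteq> T"
  show "T = S"
  proof (rule ccontr)
    assume "T \<noteq> S"
    then obtain v where "v \<in> T" "v \<notin> S" using T by auto
    then obtain u where "u \<in> S" "E v u \<or> E u v" using assms T unfolding indep_set_def by blast
    then show False using T \<open>v \<in> T\<close> unfolding indep_set_def by auto
  qed
qed

lemma rt_sym:
  assumes "\<forall>x y. E x y \<longrightarrow> E y x"
  shows "(\<lambda>x y. E x y \<and> x \<in> W \<and> y \<in> W)\<^sup>*\<^sup>* a b \<Longrightarrow> (\<lambda>x y. E x y \<and> x \<in> W \<and> y \<in> W)\<^sup>*\<^sup>* b a"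
proof (induction rule: rtranclp_induct)
  case base then show ?case by simp
next
  case (step y z)
  then show ?case using assms by (auto intro: converse_rtranclp_into_rtranclp)
qed

lemma comp_eq:
  assumes "\<forall>x y. E x y \<longrightarrow> E y x" "u \<in> comp W E v"
  shows "comp W E u = comp W E v"
proof -
  let ?R = "\<lambda>x y. E x y \<and> x \<in> W \<and> y \<in> W"
  have vu: "?R\<^sup>*\<^sup>* v u" and uv: "?R\<^sup>*\<^sup>* u v"
    using assms(2) rt_sym[OF assms(1)] unfolding comp_def by auto
  show ?thesis unfolding comp_def
    using rtranclp_trans[OF vu] rtranclp_trans[OF uv] by blast
qed

lemma comp_self: "v \<in> W \<Longrightarrow> v \<in> comp W E v"
  by (simp add: comp_def)

lemma comp_sub: "comp W E v \<subseteq> W"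
  by (auto simp: comp_def)

lemma comp_closed: "x \<in> comp W E v \<Longrightarrow> y \<in> W \<Longrightarrow> E x y \<Longrightarrow> y \<in> comp W E v"
  unfolding comp_def by (auto intro: rtranclp.rtrancl_into_rtrancl)

definition clsd :: "'a set \<Rightarrow> ('a \<Rightarrow> 'a \<Rightarrow> bool) \<Rightarrow> 'a set \<Rightarrow> bool" where
  "clsd W E C \<longleftrightarrow> C \<subseteq> W \<and> (\<forall>x\<in>C. \<forall>y\<in>W. E x y \<longrightarrow> y \<in> C)"

lemma swap_indep:
  assumes "\<forall>x y. E x y \<longrightarrow> E y x" "clsd W E C" "indep_set W E X" "indep_set W E Y"
  shows "indep_set W E ((X - C) \<union> (Y \<inter> C))"
  using assms unfolding indep_set_def clsd_def by blast


lemma comp_select: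
  assumes fin: "finite W0" and sym: "\<forall>x y. E x y \<longrightarrow> E y x"
    and A: "indep_set W0 E A" "card A = alpha W0 E"
    and J: "indep_set W0 E J" and gap: "card J + m \<le> card A"
  shows "\<exists>C. clsd W0 E C \<and> card C \<le> m * Max (card ` comp W0 E ` W0) \<and> card (J \<inter> C) + m \<le> card (A \<inter> C)"
proof -
  define D where "D = comp W0 E ` W0"
  define n0 where "n0 = Max (card ` D)"
  have finD: "finite D" using fin by (simp add: D_def)
  have Dsub: "X \<subseteq> W0" if "X \<in> D" for X using that by (auto simp: D_def comp_def)
  have Dfin: "finite X" if "X \<in> D" for X using Dsub[OF that] fin by (rule finite_subset)
  have Dcl: "clsd W0 E X" if "X \<in> D" for X
    using that comp_sub comp_closed unfolding D_def clsd_def by fastforce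
  have Dle: "card X \<le> n0" if "X \<in> D" for X
    unfolding n0_def using that finD by (simp add: Max_ge)
  have Ddisj: "X \<inter> Y = {}" if XY: "X \<in> D" "Y \<in> D" "X \<noteq> Y" for X Y
  proof (rule ccontr)
    assume "X \<inter> Y \<noteq> {}"
    then obtain x where x: "x \<in> X" "x \<in> Y" by auto
    obtain a b where "X = comp W0 E a" "Y = comp W0 E b" using XY by (auto simp: D_def)
    then show False using comp_eq[OF sym] x XY(3) by metis
  qed
  have cover: "\<Union>D = W0" using comp_sub[of W0 E] comp_self[of _ W0 E] unfolding D_def by blast
  have split: "card (X \<inter> \<Union>CC) = (\<Sum>Y\<in>CC. card (X \<inter> Y))" if "CC \<subseteq> D" "finite X" for CC X
  proof -
    have e: "X \<inter> \<Union>CC = \<Union>((\<lambda>Y. X \<inter> Y) ` CC)" by auto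
    have "finite CC" using that finD by (auto intro: finite_subset)
    then have "card (\<Union>((\<lambda>Y. X \<inter> Y) ` CC)) = (\<Sum>Y\<in>CC. card (X \<inter> Y))"
    proof (rule card_UN_disjoint)
      show "\<forall>i\<in>CC. finite (X \<inter> i)" using that(2) by simp
      show "\<forall>i\<in>CC. \<forall>j\<in>CC. i \<noteq> j \<longrightarrow> X \<inter> i \<inter> (X \<inter> j) = {}"
      proof (intro ballI impI)
        fix i j assume "i \<in> CC" "j \<in> CC" "i \<noteq> j"
        then have "i \<inter> j = {}" using that(1) Ddisj by blast
        then show "X \<inter> i \<inter> (X \<inter> j) = {}" by blast
      qed
    qed
    then show ?thesis by (simp only: e)
  qed
  have finA: "finite A" and finJ: "finite J" using A J fin unfolding indep_set_def
    by (auto intro: finite_subset)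
  define g where "g Y = int (card (A \<inter> Y)) - int (card (J \<inter> Y))" for Y
  have gnn: "g Y \<ge> 0" if "Y \<in> D" for Y
  proof -
    have "indep_set W0 E ((A - Y) \<union> (J \<inter> Y))" using swap_indep[OF sym Dcl[OF that] A(1) J] .
    then have "card ((A - Y) \<union> (J \<inter> Y)) \<le> card A" using alpha_ge[OF fin] A(2) by metis
    moreover have "card ((A - Y) \<union> (J \<inter> Y)) = card (A - Y) + card (J \<inter> Y)"
      using finA finJ by (intro card_Un_disjoint) auto
    moreover have "card A = card (A \<inter> Y) + card (A - Y)" using finA by (rule card_Int_Diff)
    ultimately show ?thesis unfolding g_def by simp
  qed
  have sumD: "(\<Sum>Y\<in>D. g Y) = int (card A) - int (card J)"
  proof -
    have "card (A \<inter> \<Union>D) = (\<Sum>Y\<in>D. card (A \<inter> Y))" by (rule split) (use finA in auto)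
    moreover have "card (J \<inter> \<Union>D) = (\<Sum>Y\<in>D. card (J \<inter> Y))" by (rule split) (use finJ in auto)
    moreover have "A \<inter> \<Union>D = A" "J \<inter> \<Union>D = J" using A J cover unfolding indep_set_def by auto
    ultimately show ?thesis unfolding g_def by (simp add: sum_subtractf)
  qed
  define P where "P = {Y\<in>D. g Y > 0}"
  have PD: "P \<subseteq> D" by (auto simp: P_def)
  have finP: "finite P" using finD PD by (auto intro: finite_subset)
  have sumP: "(\<Sum>Y\<in>P. g Y) = (\<Sum>Y\<in>D. g Y)"
    by (rule sum.mono_neutral_left[OF finD PD]) (use gnn in \<open>fastforce simp: P_def\<close>)
  obtain CC where CC: "CC \<subseteq> P" "card CC \<le> m" "(\<Sum>Y\<in>CC. g Y) \<ge> int m"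
  proof (cases "card P \<le> m")
    case True
    have "(\<Sum>Y\<in>P. g Y) \<ge> int m" using sumP sumD gap by simp
    then show ?thesis using that[of P] True by blast
  next
    case False
    then obtain T where T: "T \<subseteq> P" "card T = m" "finite T"
      using obtain_subset_with_card_n[of m P] by auto
    have "(\<Sum>Y\<in>T. g Y) \<ge> (\<Sum>Y\<in>T. 1)"
      by (rule sum_mono) (use T in \<open>auto simp: P_def\<close>)
    then have "(\<Sum>Y\<in>T. g Y) \<ge> int m" using T by simp
    then show ?thesis using that[of T] T by blast
  qed
  have CCD: "CC \<subseteq> D" using CC PD by auto
  have finCC: "finite CC" using CCD finD by (auto intro: finite_subset)
  define C where "C = \<Union>CC"
  have "clsd W0 E C" using Dcl CCD unfolding clsd_def C_def by blast
  moreover have "card C \<le> m * Max (card ` comp W0 E ` W0)"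
  proof -
    have "card C = card (W0 \<inter> \<Union>CC)" proof -
      have "C \<subseteq> W0" using Dsub CCD by (auto simp: C_def)
      then show ?thesis by (simp add: C_def Int_absorb1)
    qed
    also have "\<dots> = (\<Sum>Y\<in>CC. card (W0 \<inter> Y))" by (rule split[OF CCD fin])
    also have "\<dots> \<le> (\<Sum>Y\<in>CC. n0)"
      by (rule sum_mono) (use CCD Dle Dsub in \<open>auto simp: Int_absorb1\<close>)
    also have "\<dots> = card CC * n0" by simp
    also have "\<dots> \<le> m * n0" using CC(2) by simp
    finally show ?thesis by (simp add: n0_def D_def)
  qed
  moreover have "card (J \<inter> C) + m \<le> card (A \<inter> C)"
  proof -
    have "int (card (A \<inter> C)) - int (card (J \<inter> C)) = (\<Sum>Y\<in>CC. g Y)"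
      unfolding C_def g_def using split[OF CCD finA] split[OF CCD finJ]
      by (simp add: sum_subtractf)
    then show ?thesis using CC(3) by linarith
  qed
  ultimately show ?thesis by blast
qed


lemma nbhd_set_mono: "I' \<subseteq> I \<Longrightarrow> nbhd_set V E I' \<subseteq> nbhd_set V E I"
  unfolding nbhd_set_def by blast

lemma reduction:
  assumes g: "graph V E" and W0: "W0 \<subseteq> V"
  shows "(\<forall>I. indep_set W1 E I \<longrightarrow>
            int (alpha W0 E) - int (indep_dom (W0 - nbhd_set V E I) E) \<le> int k) \<longleftrightarrow>
     (mu_alpha W0 E \<le> int k \<and>
      (\<forall>I. indep_set W1 E I \<and>
           card I \<le> (k + 1) * Max (card ` comp W0 E ` W0) \<longrightarrow>
           int (alpha W0 E) - int (indep_dom (W0 - nbhd_set V E I) E) \<le> int k))"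
proof
  assume H: "\<forall>I. indep_set W1 E I \<longrightarrow>
            int (alpha W0 E) - int (indep_dom (W0 - nbhd_set V E I) E) \<le> int k"
  have "indep_set W1 E {}" by (simp add: indep_set_def)
  then have "int (alpha W0 E) - int (indep_dom (W0 - nbhd_set V E {}) E) \<le> int k" using H by blast
  then have "mu_alpha W0 E \<le> int k" by (simp add: mu_alpha_def nbhd_set_def)
  then show "mu_alpha W0 E \<le> int k \<and>
      (\<forall>I. indep_set W1 E I \<and>
           card I \<le> (k + 1) * Max (card ` comp W0 E ` W0) \<longrightarrow>
           int (alpha W0 E) - int (indep_dom (W0 - nbhd_set V E I) E) \<le> int k)" using H by blast
next
  assume "mu_alpha W0 E \<le> int k \<and>
      (\<forall>I. indep_set W1 E I \<and>
           card I \<le> (k + 1) * Max (card ` comp W0 E ` W0) \<longrightarrow>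
           int (alpha W0 E) - int (indep_dom (W0 - nbhd_set V E I) E) \<le> int k)"
  then have H: "\<And>I. indep_set W1 E I \<Longrightarrow>
           card I \<le> (k + 1) * Max (card ` comp W0 E ` W0) \<Longrightarrow>
           int (alpha W0 E) - int (indep_dom (W0 - nbhd_set V E I) E) \<le> int k" by blast
  have finV: "finite V" and sym: "\<forall>x y. E x y \<longrightarrow> E y x" and irr: "\<forall>x. \<not> E x x"
    using g unfolding graph_def by auto
  have fin: "finite W0" using finV W0 by (rule finite_subset[rotated])
  show "\<forall>I. indep_set W1 E I \<longrightarrow>
            int (alpha W0 E) - int (indep_dom (W0 - nbhd_set V E I) E) \<le> int k"
  proof (intro allI impI)
    fix I assume I: "indep_set W1 E I"
    define N where "N = nbhd_set V E I"
    show "int (alpha W0 E) - int (indep_dom (W0 - nbhd_set V E I) E) \<le> int k"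
    proof (rule ccontr)
      assume "\<not> ?thesis"
      then have big: "indep_dom (W0 - N) E + (k + 1) \<le> alpha W0 E" unfolding N_def by linarith
      obtain A where A: "indep_set W0 E A" "card A = alpha W0 E" using alpha_obtain[OF fin] by blast
      have finN: "finite (W0 - N)" using fin by simp
      obtain J where J: "maximal_indep_set (W0 - N) E J" "card J = indep_dom (W0 - N) E"
        using indep_dom_obtain[OF finN] by blast
      have JsubN: "J \<subseteq> W0 - N" using J unfolding maximal_indep_set_def indep_set_def by auto
      have Jind: "indep_set W0 E J" using J unfolding maximal_indep_set_def
        by (auto intro: indep_mono_W)
      obtain C where C: "clsd W0 E C" "card C \<le> (k+1) * Max (card ` comp W0 E ` W0)"
        "card (J \<inter> C) + (k+1) \<le> card (A \<inter> C)"
        using comp_select[OF fin sym A Jind, of "k+1"] big J(2) A(2) by auto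
      have finC: "finite C" using C(1) fin unfolding clsd_def by (auto intro: finite_subset)
      define sel where "sel w = (SOME i. i \<in> I \<and> w \<in> nbhd V E i)" for w
      have sel: "sel w \<in> I \<and> w \<in> nbhd V E (sel w)" if "w \<in> N" for w
      proof -
        have "\<exists>i. i \<in> I \<and> w \<in> nbhd V E i" using that unfolding N_def nbhd_set_def by blast
        then show ?thesis unfolding sel_def by (rule someI_ex)
      qed
      define I' where "I' = sel ` (C \<inter> N)"
      have I'I: "I' \<subseteq> I" using sel unfolding I'_def by auto
      have I'ind: "indep_set W1 E I'" using I I'I by (rule indep_subset)
      have "card I' \<le> card (C \<inter> N)" unfolding I'_def by (rule card_image_le) (use finC in simp)
      also have "\<dots> \<le> card C" using finC by (intro card_mono) auto
      finally have I'card: "card I' \<le> (k+1) * Max (card ` comp W0 E ` W0)" using C(2) by linarith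
      define N' where "N' = nbhd_set V E I'"
      have N'N: "N' \<subseteq> N" unfolding N'_def N_def by (rule nbhd_set_mono[OF I'I])
      have CN: "C \<inter> N \<subseteq> N'"
      proof
        fix w assume "w \<in> C \<inter> N"
        then have "sel w \<in> I'" "w \<in> nbhd V E (sel w)" using sel unfolding I'_def by auto
        then show "w \<in> N'" unfolding N'_def nbhd_set_def by blast
      qed
      have hyp: "int (alpha W0 E) - int (indep_dom (W0 - N') E) \<le> int k"
        using H[OF I'ind I'card] unfolding N'_def .
      have "indep_set (W0 - N') E (J \<inter> C)"
        using J(1) N'N unfolding maximal_indep_set_def indep_set_def by blast
      then obtain J' where J': "maximal_indep_set (W0 - N') E J'" "J \<inter> C \<subseteq> J'"
        using max_indep_extend[of "W0 - N'"] fin by blast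
      have J'ind: "indep_set (W0 - N') E J'" using J' unfolding maximal_indep_set_def by auto
      have J'C: "J' \<inter> C \<subseteq> J \<inter> C"
      proof
        fix v assume v: "v \<in> J' \<inter> C"
        show "v \<in> J \<inter> C"
        proof (rule ccontr)
          assume nv: "v \<notin> J \<inter> C"
          have vW: "v \<in> W0 - N'" using v J'ind unfolding indep_set_def by auto
          have "v \<notin> N" using v vW CN by auto
          then have "v \<in> W0 - N" "v \<notin> J" using vW nv v by auto
          then obtain u where u: "u \<in> J" "E v u \<or> E u v" using maximal_dom[OF irr J(1)] by blast
          have uW: "u \<in> W0" using u JsubN by auto
          have Evu: "E v u" using u sym by auto
          then have "u \<in> C" using C(1) v uW unfolding clsd_def by auto
          then have "u \<in> J'" using J'(2) u by auto
          then show False using Evu v J'ind unfolding indep_set_def by auto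
        qed
      qed
      have J'ind0: "indep_set W0 E J'" using J'ind by (rule indep_mono_W) auto
      have finA: "finite A" "finite J'" using A(1) J'ind0 fin unfolding indep_set_def
        by (auto intro: finite_subset)
      have "indep_set W0 E ((J' - C) \<union> (A \<inter> C))" by (rule swap_indep[OF sym C(1) J'ind0 A(1)])
      then have "card ((J' - C) \<union> (A \<inter> C)) \<le> card A" using alpha_ge[OF fin] A(2) by metis
      moreover have "card ((J' - C) \<union> (A \<inter> C)) = card (J' - C) + card (A \<inter> C)"
        using finA by (intro card_Un_disjoint) auto
      moreover have "card J' = card (J' \<inter> C) + card (J' - C)" using finA by (intro card_Int_Diff)
      moreover have "card (J' \<inter> C) \<le> card (J \<inter> C)" using J'C finC by (intro card_mono) auto
      ultimately have "card J' + (k+1) \<le> card A" using C(3) by linarith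
      moreover have "indep_dom (W0 - N') E \<le> card J'" using indep_dom_le[OF _ J'(1)] fin by simp
      ultimately show False using hyp A(2) by linarith
    qed
  qed
qed


locale tstruct =
  fixes V :: "'a set" and E :: "'a \<Rightarrow> 'a \<Rightarrow> bool"
  assumes g: "graph V E"
    and ty: "\<forall>v. internal V E v \<longrightarrow> has_type V E 0 v \<or> has_type V E 1 v"
begin

abbreviation "U \<equiv> Uset V E"
abbreviation "V0 \<equiv> type_set V E 0"
abbreviation "V1 \<equiv> type_set V E 1"
abbreviation "Lf \<equiv> {x \<in> V. leaf V E x}"

lemma finV: "finite V" using g by (simp add: graph_def)
lemma sym: "\<forall>x y. E x y \<longrightarrow> E y x" using g by (simp add: graph_def)
lemma irr: "\<forall>x. \<not> E x x" using g by (simp add: graph_def)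

lemma nonU_nbr:
  assumes "v \<in> V" "v \<notin> U" "w \<in> V" "E v w" shows "w \<notin> U"
proof
  assume wU: "w \<in> U"
  have "v \<in> comp V E w" using assms sym unfolding comp_def
    by (auto intro: r_into_rtranclp)
  then have "comp V E v = comp V E w" by (rule comp_eq[OF sym])
  then have "v \<in> U" using wU assms(1) unfolding Uset_def by auto
  then show False using assms(2) by simp
qed

lemma leaf_parent:
  assumes x: "leaf V E x"
  shows "\<exists>p. p \<in> V1 \<and> E x p \<and> (\<forall>w\<in>V. E x w \<longrightarrow> w = p) \<and>
             card {u \<in> V. leaf V E u \<and> E p u} = 1"
proof -
  have xV: "x \<in> V" "x \<notin> U" and c1: "card (nbhd (V - U) E x) = 1"
    using x unfolding leaf_def by auto
  obtain p where pe: "nbhd (V - U) E x = {p}" using c1 by (rule card_1_singletonE)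
  have p: "p \<in> V" "p \<notin> U" "E x p" using pe unfolding nbhd_def by auto
  have uniq: "\<forall>w\<in>V. E x w \<longrightarrow> w = p"
  proof (intro ballI impI)
    fix w assume "w \<in> V" "E x w"
    then have "w \<in> nbhd (V - U) E x" using nonU_nbr[OF xV] unfolding nbhd_def by auto
    then show "w = p" using pe by auto
  qed
  have notleaf: "\<not> leaf V E p"
  proof
    assume "leaf V E p"
    then have "card (nbhd (V - U) E p) = 1" unfolding leaf_def by auto
    then obtain q where qe: "nbhd (V - U) E p = {q}" by (rule card_1_singletonE)
    have "x \<in> nbhd (V - U) E p" using xV p sym unfolding nbhd_def by auto
    then have qx: "q = x" using qe by auto
    have puniq: "\<forall>w\<in>V. E p w \<longrightarrow> w = x"
    proof (intro ballI impI)
      fix w assume "w \<in> V" "E p w"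
      then have "w \<in> nbhd (V - U) E p" using nonU_nbr[OF p(1,2)] unfolding nbhd_def by auto
      then show "w = x" using qe qx by auto
    qed
    have "(\<lambda>a b. E a b \<and> a \<in> V \<and> b \<in> V)\<^sup>*\<^sup>* x u \<Longrightarrow> u \<in> {x, p}" for u
    proof (induction rule: rtranclp_induct)
      case base then show ?case by simp
    next
      case (step y z)
      then show ?case using uniq puniq by auto
    qed
    then have cx: "comp V E x \<subseteq> {x, p}" unfolding comp_def by auto
    have "x \<noteq> p" using p(3) irr by auto
    have "\<forall>a\<in>comp V E x. \<forall>b\<in>comp V E x. a \<noteq> b \<longrightarrow> E a b"
      using cx p(3) sym by auto
    then have "x \<in> U" using xV unfolding Uset_def by auto
    then show False using xV by simp
  qed
  have pint: "internal V E p" using p notleaf unfolding internal_def leaf_def by auto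
  have finS: "finite {u \<in> V. leaf V E u \<and> E p u}" using finV by simp
  have "x \<in> {u \<in> V. leaf V E u \<and> E p u}" using xV x p sym by auto
  then have cpos: "card {u \<in> V. leaf V E u \<and> E p u} \<noteq> 0" using finS by auto
  have "has_type V E 0 p \<or> has_type V E 1 p" using ty pint by blast
  then have "has_type V E 1 p" using cpos p(2) unfolding has_type_def by auto
  then have "p \<in> V1" "card {u \<in> V. leaf V E u \<and> E p u} = 1"
    using p(1,2) unfolding type_set_def has_type_def by auto
  then show ?thesis using p(3) uniq by blast
qed

lemma V1_leaf:
  assumes "v \<in> V1"
  shows "\<exists>x. x \<in> V \<and> leaf V E x \<and> E v x \<and> (\<forall>y\<in>V. leaf V E y \<and> E v y \<longrightarrow> y = x)"
proof -
  have "has_type V E 1 v" using assms unfolding type_set_def by auto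
  then have "card {u \<in> V. leaf V E u \<and> E v u} = 1" unfolding has_type_def by auto
  then obtain x where "{u \<in> V. leaf V E u \<and> E v u} = {x}" by (rule card_1_singletonE)
  then show ?thesis by blast
qed

lemma parts: "V = V0 \<union> V1 \<union> Lf"
proof
  show "V \<subseteq> V0 \<union> V1 \<union> Lf"
  proof
    fix v assume v: "v \<in> V"
    show "v \<in> V0 \<union> V1 \<union> Lf"
    proof (cases "v \<in> U")
      case True then show ?thesis using v unfolding type_set_def has_type_def by auto
    next
      case False
      show ?thesis
      proof (cases "leaf V E v")
        case True then show ?thesis using v by auto
      next
        case nl: False
        then have "internal V E v" using v False unfolding leaf_def internal_def by auto
        then show ?thesis using ty v unfolding type_set_def by auto
      qed
    qed
  qed
  show "V0 \<union> V1 \<union> Lf \<subseteq> V" unfolding type_set_def by auto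
qed

lemma ht_cases: "has_type V E k v \<Longrightarrow> (v \<in> U \<and> k = 0) \<or> (v \<notin> U \<and> card (nbhd (V - U) E v) \<noteq> 1 \<and> card {u \<in> V. leaf V E u \<and> E v u} = k)"
  unfolding has_type_def internal_def by blast

lemma disj01: "V0 \<inter> V1 = {}"
proof -
  have False if "has_type V E 0 v" "has_type V E 1 v" for v
    using ht_cases[OF that(1)] ht_cases[OF that(2)] by linarith
  then show ?thesis unfolding type_set_def by blast
qed
lemma disj0L: "V0 \<inter> Lf = {}"
proof -
  have False if "has_type V E 0 v" "leaf V E v" for v
    using ht_cases[OF that(1)] that(2) unfolding leaf_def by blast
  then show ?thesis unfolding type_set_def by blast
qed
lemma disj1L: "V1 \<inter> Lf = {}"
proof -
  have False if "has_type V E 1 v" "leaf V E v" for v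
    using ht_cases[OF that(1)] that(2) unfolding leaf_def by blast
  then show ?thesis unfolding type_set_def by blast
qed
lemma V0sub: "V0 \<subseteq> V" and V1sub: "V1 \<subseteq> V" unfolding type_set_def by auto

definition par where "par x = (SOME p. p \<in> V1 \<and> E x p \<and> (\<forall>w\<in>V. E x w \<longrightarrow> w = p))"
definition lf where "lf v = (SOME x. x \<in> V \<and> leaf V E x \<and> E v x \<and> (\<forall>y\<in>V. leaf V E y \<and> E v y \<longrightarrow> y = x))"

lemma par: assumes "x \<in> Lf" shows "par x \<in> V1" "E x (par x)" "\<And>w. w \<in> V \<Longrightarrow> E x w \<Longrightarrow> w = par x"
proof -
  have "\<exists>p. p \<in> V1 \<and> E x p \<and> (\<forall>w\<in>V. E x w \<longrightarrow> w = p)" using leaf_parent assms by blast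
  then have "par x \<in> V1 \<and> E x (par x) \<and> (\<forall>w\<in>V. E x w \<longrightarrow> w = par x)"
    unfolding par_def by (rule someI_ex)
  then show "par x \<in> V1" "E x (par x)" "\<And>w. w \<in> V \<Longrightarrow> E x w \<Longrightarrow> w = par x" by auto
qed

lemma lf: assumes "v \<in> V1" shows "lf v \<in> Lf" "E v (lf v)" "\<And>y. y \<in> Lf \<Longrightarrow> E v y \<Longrightarrow> y = lf v"
proof -
  have "lf v \<in> V \<and> leaf V E (lf v) \<and> E v (lf v) \<and> (\<forall>y\<in>V. leaf V E y \<and> E v y \<longrightarrow> y = lf v)"
    unfolding lf_def by (rule someI_ex) (rule V1_leaf[OF assms])
  then show "lf v \<in> Lf" "E v (lf v)" "\<And>y. y \<in> Lf \<Longrightarrow> E v y \<Longrightarrow> y = lf v" by auto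
qed

lemma leaf_nbr_V1: "x \<in> Lf \<Longrightarrow> w \<in> V \<Longrightarrow> E x w \<Longrightarrow> w \<in> V1"
proof -
  assume a: "x \<in> Lf" "w \<in> V" "E x w"
  then have "w = par x" by (rule par(3))
  then show ?thesis using par(1)[OF a(1)] by simp
qed

lemma par_lf: "v \<in> V1 \<Longrightarrow> par (lf v) = v"
proof -
  assume v: "v \<in> V1"
  have "v \<in> V" using v V1sub by auto
  moreover have "E (lf v) v" using lf(2)[OF v] sym by auto
  ultimately have "v = par (lf v)" by (rule par(3)[OF lf(1)[OF v]])
  then show ?thesis by simp
qed

end


context tstruct
begin

lemma finV0: "finite V0" and finV1: "finite V1" and finLf: "finite Lf"
  using finV V0sub V1sub by (auto intro: finite_subset)

lemma alpha_G: "alpha V E = card V1 + alpha V0 E"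
proof (rule antisym)
  obtain S where S: "indep_set V E S" "card S = alpha V E" using alpha_obtain[OF finV] by blast
  have finS: "finite S" using S finV unfolding indep_set_def by (auto intro: finite_subset)
  have SV: "S \<subseteq> V" using S unfolding indep_set_def by auto
  have e: "S = (S \<inter> V0) \<union> (S \<inter> (V1 \<union> Lf))" using SV parts by blast
  have "card S \<le> card (S \<inter> V0) + card (S \<inter> (V1 \<union> Lf))"
    by (subst e) (rule card_Un_le)
  moreover have "card (S \<inter> V0) \<le> alpha V0 E"
    by (rule alpha_ge[OF finV0]) (use S in \<open>auto simp: indep_set_def\<close>)
  moreover have "card (S \<inter> (V1 \<union> Lf)) \<le> card V1"
  proof -
    define f where "f v = (if v \<in> V1 then v else par v)" for v
    have "inj_on f (S \<inter> (V1 \<union> Lf))"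
    proof (rule inj_onI)
      fix x y assume x: "x \<in> S \<inter> (V1 \<union> Lf)" and y: "y \<in> S \<inter> (V1 \<union> Lf)" and fxy: "f x = f y"
      show "x = y"
      proof (cases "x \<in> V1")
        case xV1: True
        show ?thesis
        proof (cases "y \<in> V1")
          case True then show ?thesis using xV1 fxy by (simp add: f_def)
        next
          case False
          then have yL: "y \<in> Lf" using y by auto
          have "par y = x" using fxy xV1 False by (simp add: f_def)
          then have "E y x" using par(2)[OF yL] by simp
          then show ?thesis using x y S(1) unfolding indep_set_def by auto
        qed
      next
        case xn: False
        then have xL: "x \<in> Lf" using x by auto
        show ?thesis
        proof (cases "y \<in> V1")
          case True
          have "par x = y" using fxy xn True by (simp add: f_def)
          then have "E x y" using par(2)[OF xL] by simp
          then show ?thesis using x y S(1) unfolding indep_set_def by auto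
        next
          case False
          then have yL: "y \<in> Lf" using y by auto
          have pp: "par x = par y" using fxy xn False by (simp add: f_def)
          have p: "par x \<in> V1" using par(1)[OF xL] .
          have "E (par x) x" using par(2)[OF xL] sym by auto
          then have "x = lf (par x)" using lf(3)[OF p xL] by simp
          moreover have "E (par x) y" using par(2)[OF yL] pp sym by auto
          then have "y = lf (par x)" using lf(3)[OF p yL] by simp
          ultimately show ?thesis by simp
        qed
      qed
    qed
    moreover have "f ` (S \<inter> (V1 \<union> Lf)) \<subseteq> V1" using par(1) by (auto simp: f_def)
    ultimately show ?thesis using finV1 by (rule card_inj_on_le)
  qed
  ultimately show "alpha V E \<le> card V1 + alpha V0 E" using S(2) by linarith
next
  obtain A where A: "indep_set V0 E A" "card A = alpha V0 E" using alpha_obtain[OF finV0] by blast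
  have AV0: "A \<subseteq> V0" using A unfolding indep_set_def by auto
  have finA: "finite A" using AV0 finV0 by (rule finite_subset)
  have "indep_set V E (A \<union> Lf)"
    unfolding indep_set_def
  proof (intro conjI ballI)
    show "A \<union> Lf \<subseteq> V" using AV0 V0sub by auto
    fix x y assume x: "x \<in> A \<union> Lf" and y: "y \<in> A \<union> Lf"
    show "\<not> E x y"
    proof
      assume Exy: "E x y"
      have xV: "x \<in> V" and yV: "y \<in> V" using x y AV0 V0sub by auto
      show False
      proof (cases "x \<in> Lf")
        case True
        then have "y \<in> V1" using leaf_nbr_V1 yV Exy by blast
        then show False using y AV0 disj01 disj1L by blast
      next
        case False
        then have xA: "x \<in> A" using x by auto
        show False
        proof (cases "y \<in> Lf")
          case True
          then have "x \<in> V1" using leaf_nbr_V1 xV Exy sym by blast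
          then show False using xA AV0 disj01 by blast
        next
          case False
          then have "y \<in> A" using y by auto
          then show False using xA A(1) Exy unfolding indep_set_def by auto
        qed
      qed
    qed
  qed
  then have "card (A \<union> Lf) \<le> alpha V E" by (rule alpha_ge[OF finV])
  moreover have "card (A \<union> Lf) = card A + card Lf"
    using finA finLf AV0 disj0L by (intro card_Un_disjoint) auto
  moreover have "card V1 \<le> card Lf"
  proof (rule card_inj_on_le[OF _ _ finLf])
    show "inj_on lf V1" by (rule inj_onI) (metis par_lf)
    show "lf ` V1 \<subseteq> Lf" using lf(1) by auto
  qed
  ultimately show "card V1 + alpha V0 E \<le> alpha V E" using A(2) by linarith
qed

lemma i_lower:
  assumes S: "maximal_indep_set V E S"
  shows "card V1 + indep_dom (V0 - nbhd_set V E (S \<inter> V1)) E \<le> card S"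
proof -
  define I where "I = S \<inter> V1"
  define J where "J = S \<inter> V0"
  have Sind: "indep_set V E S" using S unfolding maximal_indep_set_def by auto
  have SV: "S \<subseteq> V" using Sind unfolding indep_set_def by auto
  have finS: "finite S" using SV finV by (rule finite_subset)
  have JN: "J \<subseteq> V0 - nbhd_set V E I"
  proof
    fix j assume j: "j \<in> J"
    have "j \<notin> nbhd_set V E I"
    proof
      assume "j \<in> nbhd_set V E I"
      then obtain i where "i \<in> I" "E i j" unfolding nbhd_set_def nbhd_def by auto
      then show False using j Sind unfolding I_def J_def indep_set_def by auto
    qed
    then show "j \<in> V0 - nbhd_set V E I" using j by (auto simp: J_def)
  qed
  have "maximal_indep_set (V0 - nbhd_set V E I) E J"
  proof (rule dom_maximal)
    show "indep_set (V0 - nbhd_set V E I) E J" using JN Sind unfolding indep_set_def J_def by auto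
    show "\<forall>v\<in>V0 - nbhd_set V E I - J. \<exists>u\<in>J. E v u \<or> E u v"
    proof
      fix v assume v: "v \<in> V0 - nbhd_set V E I - J"
      then have "v \<in> V" "v \<notin> S" using V0sub by (auto simp: J_def)
      then obtain u where u: "u \<in> S" "E v u \<or> E u v" using maximal_dom[OF irr S] by blast
      have Evu: "E v u" using u sym by auto
      have uV: "u \<in> V" using u SV by auto
      have "u \<notin> Lf"
      proof
        assume "u \<in> Lf"
        then have "v \<in> V1" using leaf_nbr_V1 \<open>v \<in> V\<close> u sym by blast
        then show False using v disj01 by blast
      qed
      moreover have "u \<notin> V1"
      proof
        assume "u \<in> V1"
        then have "u \<in> I" using u by (simp add: I_def)
        then have "v \<in> nbhd_set V E I" using Evu sym \<open>v \<in> V\<close> unfolding nbhd_set_def nbhd_def by auto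
        then show False using v by auto
      qed
      ultimately have "u \<in> J" using uV parts u by (auto simp: J_def)
      then show "\<exists>u\<in>J. E v u \<or> E u v" using Evu by blast
    qed
  qed
  then have "indep_dom (V0 - nbhd_set V E I) E \<le> card J" by (intro indep_dom_le) (use finV0 in auto)
  moreover have "card V1 \<le> card (S \<inter> (V1 \<union> Lf))"
  proof (rule card_inj_on_le)
    define h where "h v = (if v \<in> S then v else lf v)" for v
    show "inj_on h V1"
    proof (rule inj_onI)
      fix x y assume x: "x \<in> V1" and y: "y \<in> V1" and hxy: "h x = h y"
      have hx: "h x = x \<or> (h x = lf x \<and> h x \<in> Lf)" using lf(1)[OF x] by (auto simp: h_def)
      have hy: "h y = y \<or> (h y = lf y \<and> h y \<in> Lf)" using lf(1)[OF y] by (auto simp: h_def)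
      have "lf x = lf y \<or> x = y" using hx hy hxy x y disj1L by auto
      then show "x = y" using par_lf[OF x] par_lf[OF y] by metis
    qed
    show "h ` V1 \<subseteq> S \<inter> (V1 \<union> Lf)"
    proof
      fix w assume "w \<in> h ` V1"
      then obtain v where v: "v \<in> V1" "w = h v" by auto
      show "w \<in> S \<inter> (V1 \<union> Lf)"
      proof (cases "v \<in> S")
        case True then show ?thesis using v by (simp add: h_def)
      next
        case False
        have "lf v \<in> S"
        proof (rule ccontr)
          assume "lf v \<notin> S"
          then obtain u where u: "u \<in> S" "E (lf v) u \<or> E u (lf v)"
            using maximal_dom[OF irr S] lf(1)[OF v(1)] by blast
          have "E (lf v) u" using u sym by auto
          then have "u = par (lf v)" using par(3)[OF lf(1)[OF v(1)]] u SV by auto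
          then have "u = v" using par_lf v by simp
          then show False using u False by simp
        qed
        then show ?thesis using v False lf(1)[OF v(1)] by (simp add: h_def)
      qed
    qed
    show "finite (S \<inter> (V1 \<union> Lf))" using finS by simp
  qed
  moreover have "card S = card J + card (S \<inter> (V1 \<union> Lf))"
  proof -
    have "S = J \<union> (S \<inter> (V1 \<union> Lf))" using SV parts by (auto simp: J_def)
    moreover have "card (J \<union> (S \<inter> (V1 \<union> Lf))) = card J + card (S \<inter> (V1 \<union> Lf))"
      using finS disj01 disj0L by (intro card_Un_disjoint) (auto simp: J_def)
    ultimately show ?thesis by simp
  qed
  ultimately show ?thesis unfolding I_def by linarith
qed

lemma i_upper:
  assumes I: "indep_set V1 E I" and J: "maximal_indep_set (V0 - nbhd_set V E I) E J"
  shows "indep_dom V E \<le> card V1 + card J"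
proof -
  define S where "S = I \<union> J \<union> lf ` (V1 - I)"
  have IV1: "I \<subseteq> V1" using I unfolding indep_set_def by auto
  have Jind: "indep_set (V0 - nbhd_set V E I) E J" using J unfolding maximal_indep_set_def by auto
  have JN: "J \<subseteq> V0 - nbhd_set V E I" using Jind unfolding indep_set_def by auto
  have Sind: "indep_set V E S"
    unfolding indep_set_def
  proof (intro conjI ballI)
    show "S \<subseteq> V" using IV1 JN V0sub V1sub lf(1) by (auto simp: S_def)
    fix x y assume x: "x \<in> S" and y: "y \<in> S"
    show "\<not> E x y"
    proof
      assume Exy: "E x y"
      have Eyx: "E y x" using Exy sym by auto
      have xV: "x \<in> V" and yV: "y \<in> V" using x y IV1 JN V0sub V1sub lf(1) by (auto simp: S_def)
      have nI: False if "a \<in> I" "b \<in> J" "E a b" for a b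
      proof -
        have "b \<in> nbhd_set V E I" using that JN V0sub unfolding nbhd_set_def nbhd_def by auto
        then show False using that JN by auto
      qed
      have nL: False if ab: "a \<in> lf ` (V1 - I)" "b \<in> S" "E a b" for a b
      proof -
        obtain v where v: "v \<in> V1 - I" "a = lf v" using ab(1) by auto
        have bV: "b \<in> V" using that(2) IV1 JN V0sub V1sub lf(1) by (auto simp: S_def)
        have aL: "a \<in> Lf" using v lf(1) by auto
        have "b = par a" using par(3)[OF aL bV that(3)] .
        then have bv: "b = v" using v par_lf by simp
        have "b \<notin> J" using bv v JN disj01 by auto
        moreover have "b \<notin> lf ` (V1 - I)" using bv v lf(1) disj1L by auto
        ultimately show False using that(2) bv v by (auto simp: S_def)
      qed
      show False
      proof (cases "x \<in> lf ` (V1 - I)")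
        case True then show False using nL y Exy by blast
      next
        case xn: False
        show False
        proof (cases "y \<in> lf ` (V1 - I)")
          case True then show False using nL x Eyx by blast
        next
          case False
          then have "x \<in> I \<union> J" "y \<in> I \<union> J" using x y xn by (auto simp: S_def)
          then show False using I Jind nI Exy Eyx unfolding indep_set_def by blast
        qed
      qed
    qed
  qed
  have "maximal_indep_set V E S"
  proof (rule dom_maximal[OF Sind])
    show "\<forall>v\<in>V - S. \<exists>u\<in>S. E v u \<or> E u v"
    proof
      fix v assume v: "v \<in> V - S"
      have "v \<in> V0 \<or> v \<in> V1 \<or> v \<in> Lf" using v parts by blast
      then show "\<exists>u\<in>S. E v u \<or> E u v"
      proof (elim disjE)
        assume v0: "v \<in> V0"
        show ?thesis
        proof (cases "v \<in> nbhd_set V E I")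
          case True
          then obtain i where "i \<in> I" "E i v" unfolding nbhd_set_def nbhd_def by auto
          then show ?thesis by (auto simp: S_def)
        next
          case False
          then have "v \<in> V0 - nbhd_set V E I" "v \<notin> J" using v0 v by (auto simp: S_def)
          then obtain u where "u \<in> J" "E v u \<or> E u v" using maximal_dom[OF irr J] by blast
          then show ?thesis by (auto simp: S_def)
        qed
      next
        assume v1: "v \<in> V1"
        then have "v \<notin> I" using v by (auto simp: S_def)
        then have "lf v \<in> S" using v1 by (auto simp: S_def)
        then show ?thesis using lf(2)[OF v1] by blast
      next
        assume vL: "v \<in> Lf"
        have p: "par v \<in> V1" using par(1)[OF vL] .
        show ?thesis
        proof (cases "par v \<in> I")
          case True then show ?thesis using par(2)[OF vL] by (auto simp: S_def)
        next
          case False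
          have "E (par v) v" using par(2)[OF vL] sym by auto
          then have "v = lf (par v)" using lf(3)[OF p vL] by simp
          then have "v \<in> S" using p False by (auto simp: S_def)
          then show ?thesis using v by simp
        qed
      qed
    qed
  qed
  then have "indep_dom V E \<le> card S" by (rule indep_dom_le[OF finV])
  also have "card S \<le> card I + card J + card (lf ` (V1 - I))"
  proof -
    have fI: "finite I" using IV1 finV1 by (rule finite_subset)
    have fJ: "finite J" using JN finV0 by (auto intro: finite_subset)
    have "card S \<le> card (I \<union> J) + card (lf ` (V1 - I))" unfolding S_def by (rule card_Un_le)
    moreover have "card (I \<union> J) \<le> card I + card J" by (rule card_Un_le)
    ultimately show ?thesis by linarith
  qed
  also have "\<dots> \<le> card I + card J + card (V1 - I)"
    using card_image_le[of "V1 - I" lf] finV1 by simp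
  also have "\<dots> = card V1 + card J"
    using card_Diff_subset[OF finite_subset[OF IV1 finV1] IV1] card_mono[OF finV1 IV1] by simp
  finally show ?thesis .
qed

lemma key:
  "mu_alpha V E \<le> int k \<longleftrightarrow>
   (\<forall>I. indep_set V1 E I \<longrightarrow>
            int (alpha V0 E) - int (indep_dom (V0 - nbhd_set V E I) E) \<le> int k)"
proof
  assume mu: "mu_alpha V E \<le> int k"
  show "\<forall>I. indep_set V1 E I \<longrightarrow>
            int (alpha V0 E) - int (indep_dom (V0 - nbhd_set V E I) E) \<le> int k"
  proof (intro allI impI)
    fix I assume I: "indep_set V1 E I"
    have fin: "finite (V0 - nbhd_set V E I)" using finV0 by simp
    obtain J where J: "maximal_indep_set (V0 - nbhd_set V E I) E J"
      "card J = indep_dom (V0 - nbhd_set V E I) E" using indep_dom_obtain[OF fin] by blast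
    have "indep_dom V E \<le> card V1 + card J" by (rule i_upper[OF I J(1)])
    then show "int (alpha V0 E) - int (indep_dom (V0 - nbhd_set V E I) E) \<le> int k"
      using mu alpha_G J(2) unfolding mu_alpha_def by linarith
  qed
next
  assume H: "\<forall>I. indep_set V1 E I \<longrightarrow>
            int (alpha V0 E) - int (indep_dom (V0 - nbhd_set V E I) E) \<le> int k"
  obtain S where S: "maximal_indep_set V E S" "card S = indep_dom V E"
    using indep_dom_obtain[OF finV] by blast
  have "indep_set V1 E (S \<inter> V1)" using S(1) unfolding maximal_indep_set_def indep_set_def by auto
  then have "int (alpha V0 E) - int (indep_dom (V0 - nbhd_set V E (S \<inter> V1)) E) \<le> int k" using H by blast
  moreover have "card V1 + indep_dom (V0 - nbhd_set V E (S \<inter> V1)) E \<le> card S" by (rule i_lower[OF S(1)])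
  ultimately show "mu_alpha V E \<le> int k" using S(2) alpha_G unfolding mu_alpha_def by linarith
qed

end

theorem theorem9:
  fixes V :: "'a set" and E :: "'a \<Rightarrow> 'a \<Rightarrow> bool" and k :: nat
  assumes "graph V E"
    and "\<forall>v. internal V E v \<longrightarrow> has_type V E 0 v \<or> has_type V E 1 v"
    and "type_set V E 0 \<noteq> {}"
  shows "mu_alpha V E \<le> int k \<longleftrightarrow>
     (mu_alpha (type_set V E 0) E \<le> int k \<and>
      (\<forall>I. indep_set (type_set V E 1) E I \<and>
           card I \<le> (k + 1) * Max (card ` comp (type_set V E 0) E ` type_set V E 0) \<longrightarrow>
           int (alpha (type_set V E 0) E)
             - int (indep_dom (type_set V E 0 - nbhd_set V E I) E) \<le> int k))"
proof -
  interpret tstruct V E using assms(1,2) by unfold_locales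
  show ?thesis using key[of k] reduction[OF assms(1) V0sub, of "type_set V E 1" k] by simp
qed

end
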